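(* Let $a,a^{+}$ be boson operators with $aa^{+}-a^{+}a=1$ and let $\lambda$ be a nonzero real number. For all integers $m,n\ge0$, \[ (a^{+}a)_{m+n,\lambda}=\sum_{j=0}^{m}{m\brace j}_\lambda (a^{+})^{j}\,(a^{+}a+j-m\lambda)_{n,\lambda}\,a^{j}. \]
   Context: For an operator $X$ and real $\lambda\neq0$, $(X)_{0,\lambda}=1$ and $(X)_{n,\lambda}=X(X-\lambda)\cdots(X-(n-1)\lambda)$ for $n\ge1$ (scalars mean multiples of the identity). The degenerate Stirling numbers of the second kind ${n\brace k}_\lambda$ are defined by $(x)_{n,\lambda}=\sum_{k=0}^{n}{n\brace k}_\lambda (x)_k$, where $(x)_k=x(x-1)\cdots(x-k+1)$. *)

theory Defs
  imports Complex_Main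
begin

primrec dfall :: "'a::real_algebra_1 \<Rightarrow> nat \<Rightarrow> real \<Rightarrow> 'a" where
  "dfall X 0 l = 1"
| "dfall X (Suc n) l = dfall X n l * (X - of_real (real n * l))"

definition falling :: "real \<Rightarrow> nat \<Rightarrow> real" where
  "falling x k = (\<Prod>i<k. x - real i)"

definition dstirling :: "nat \<Rightarrow> nat \<Rightarrow> real \<Rightarrow> real" where
  "dstirling n k l = (THE c. (\<forall>x::real. dfall x n l = (\<Sum>j=0..n. c j * falling x j))
                          \<and> (\<forall>j>n. c j = 0)) k"

end

theory Submission
  imports Defs
begin

fun S :: "nat \<Rightarrow> nat \<Rightarrow> real \<Rightarrow> real" where
  "S 0 k l = (if k = 0 then 1 else 0)"
| "S (Suc n) 0 l = - (real n * l) * S n 0 l"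
| "S (Suc n) (Suc k) l = S n k l + (real (Suc k) - real n * l) * S n (Suc k) l"

lemma S_zero: "n < k \<Longrightarrow> S n k l = 0"
proof (induction n arbitrary: k)
  case 0 then show ?case by simp
next
  case (Suc n) then show ?case by (cases k) auto
qed

lemma S_rec_sum:
  fixes g :: "nat \<Rightarrow> 'a::real_algebra_1"
  shows "(\<Sum>k=0..Suc m. of_real (S (Suc m) k l) * g k) =
    (\<Sum>j=0..m. of_real (S m j l) * (g (Suc j) + of_real (real j - real m * l) * g j))"
proof -
  define h where "h j = of_real (S m j l * (real j - real m * l)) * g j" for j
  have "(\<Sum>j=0..m. h j) = (\<Sum>j=0..Suc m. h j)"
    by (simp add: h_def S_zero)
  also have "\<dots> = h 0 + (\<Sum>i=0..m. h (Suc i))"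
    by (simp only: sum.atLeast0_atMost_Suc_shift comp_def)
  finally have H: "(\<Sum>j=0..m. h j) = h 0 + (\<Sum>i=0..m. h (Suc i))" .
  have "(\<Sum>k=0..Suc m. of_real (S (Suc m) k l) * g k) =
     of_real (S (Suc m) 0 l) * g 0 + (\<Sum>i=0..m. of_real (S (Suc m) (Suc i) l) * g (Suc i))"
    by (simp only: sum.atLeast0_atMost_Suc_shift comp_def)
  also have "\<dots> = h 0 + ((\<Sum>i=0..m. of_real (S m i l) * g (Suc i)) + (\<Sum>i=0..m. h (Suc i)))"
    unfolding sum.distrib[symmetric]
    by (rule arg_cong2[where f="(+)"], simp add: h_def algebra_simps, rule sum.cong, simp_all add: h_def algebra_simps)
  also have "\<dots> = (\<Sum>i=0..m. of_real (S m i l) * g (Suc i)) + (\<Sum>j=0..m. h j)"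
    using H by (simp add: algebra_simps)
  also have "\<dots> = (\<Sum>j=0..m. of_real (S m j l) * (g (Suc j) + of_real (real j - real m * l) * g j))"
    unfolding sum.distrib[symmetric]
    by (rule sum.cong, simp, simp only: h_def of_real_mult distrib_left mult.assoc)
  finally show ?thesis .
qed

lemma falling_Suc: "falling x (Suc j) = falling x j * (x - real j)"
  by (simp add: falling_def)

lemma S_poly: "dfall x n l = (\<Sum>j=0..n. S n j l * falling x j)"
proof (induction n)
  case 0 then show ?case by (simp add: falling_def)
next
  case (Suc n)
  have "dfall x (Suc n) l = (\<Sum>j=0..n. S n j l * falling x j) * (x - real n * l)"
    using Suc by simp
  also have "\<dots> = (\<Sum>j=0..n. S n j l * (falling x (Suc j) + (real j - real n * l) * falling x j))"
    by (subst sum_distrib_right, rule sum.cong, simp_all add: falling_Suc algebra_simps)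
  also have "\<dots> = (\<Sum>k=0..Suc n. S (Suc n) k l * falling x k)"
    using S_rec_sum[of n l "falling x"] by simp
  finally show ?case .
qed

lemma falling_self_ne: "falling (real i) i \<noteq> 0"
  unfolding falling_def by (rule prod_pos[THEN less_imp_neq, THEN not_sym]) auto

lemma falling_big: "i < j \<Longrightarrow> falling (real i) j = 0"
  unfolding falling_def by (rule prod_zero) auto

lemma falling_unique:
  assumes "\<forall>x. (\<Sum>j=0..n. e j * falling x j) = (0::real)"
  shows "i \<le> n \<Longrightarrow> e i = 0"
proof (induction i rule: less_induct)
  case (less i)
  have "(\<Sum>j=0..n. e j * falling (real i) j) = (\<Sum>j=0..n. if j = i then e i * falling (real i) i else 0)"
  proof (rule sum.cong)
    fix j assume j: "j \<in> {0..n}"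
    show "e j * falling (real i) j = (if j = i then e i * falling (real i) i else 0)"
    proof (cases "j < i")
      case True then show ?thesis using less.IH[of j] j by auto
    next
      case False then show ?thesis using falling_big[of i j] by auto
    qed
  qed simp
  also have "\<dots> = e i * falling (real i) i" using less by simp
  finally show ?case using assms falling_self_ne[of i] by auto
qed

lemma dstirling_eq: "dstirling n k l = S n k l"
proof -
  have "(THE c. (\<forall>x::real. dfall x n l = (\<Sum>j=0..n. c j * falling x j)) \<and> (\<forall>j>n. c j = 0))
        = (\<lambda>k. S n k l)"
  proof (rule the_equality)
    show "(\<forall>x::real. dfall x n l = (\<Sum>j=0..n. S n j l * falling x j)) \<and> (\<forall>j>n. S n j l = 0)"
      using S_poly S_zero by auto
  next
    fix c assume c: "(\<forall>x::real. dfall x n l = (\<Sum>j=0..n. c j * falling x j)) \<and> (\<forall>j>n. c j = 0)"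
    have "\<forall>x. (\<Sum>j=0..n. (c j - S n j l) * falling x j) = (0::real)"
      using c S_poly by (simp add: sum_subtractf left_diff_distrib)
    then have "j \<le> n \<Longrightarrow> c j - S n j l = 0" for j
      by (rule falling_unique[where e = "\<lambda>j. c j - S n j l"])
    then show "c = (\<lambda>k. S n k l)" using c S_zero
      by (metis eq_iff_diff_eq_0 not_le)
  qed
  then show ?thesis unfolding dstirling_def by simp
qed

lemma of_real_comm: "of_real r * (x::'a::real_algebra_1) = x * of_real r"
  by (simp add: of_real_def)

lemma dfall_Suc': "dfall X (Suc n) l = X * dfall (X - of_real l) n l"
proof (induction n)
  case 0 then show ?case by simp
next
  case (Suc n)
  have "dfall X (Suc (Suc n)) l = X * dfall (X - of_real l) n l * (X - of_real (real (Suc n) * l))"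
    using Suc by simp
  also have "\<dots> = X * dfall (X - of_real l) (Suc n) l"
    by (simp add: algebra_simps of_real_add)
  finally show ?case .
qed

lemma dfall_comm:
  fixes a X Y :: "'a::real_algebra_1"
  assumes "a * X = Y * a"
  shows "a * dfall X n l = dfall Y n l * a"
proof (induction n)
  case 0 then show ?case by simp
next
  case (Suc n)
  have "a * dfall X (Suc n) l = dfall Y n l * (a * (X - of_real (real n * l)))"
    using Suc by (simp add: mult.assoc[symmetric])
  also have "a * (X - of_real (real n * l)) = (Y - of_real (real n * l)) * a"
    using assms of_real_comm[of "real n * l" a] by (simp add: right_diff_distrib left_diff_distrib)
  finally show ?case by (simp add: mult.assoc)
qed

lemma step_term:
  fixes a ad :: "'a::real_algebra_1" and m n j :: nat and l :: real
  assumes comm: "a * ad = ad * a + 1"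
  defines "T \<equiv> \<lambda>k. ad ^ k * dfall (ad * a + of_nat k - of_real (real (Suc m) * l)) n l * a ^ k"
  shows "ad ^ j * dfall (ad * a + of_nat j - of_real (real m * l)) (Suc n) l * a ^ j
     = T (Suc j) + of_real (real j - real m * l) * T j"
proof -
  define N where "N = ad * a"
  define X where "X = N + of_nat j - of_real (real (Suc m) * l)"
  define c where "c = (of_real (real j - real m * l) :: 'a)"
  define D where "D = dfall X n l"
  have aN: "a * N = (N + 1) * a" unfolding N_def
    by (simp add: mult.assoc[symmetric] comm distrib_right)
  have aX: "a * X = (X + 1) * a"
    unfolding X_def using aN of_real_comm[of "real (Suc m) * l" a] mult_of_nat_commute[of j a]
    by (simp add: algebra_simps)
  have X1: "X + 1 = N + of_nat (Suc j) - of_real (real (Suc m) * l)"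
    unfolding X_def by simp
  have aD: "a * D = dfall (X + 1) n l * a" unfolding D_def by (rule dfall_comm[OF aX])
  have e1: "N + c - of_real l = X"
    unfolding X_def c_def by (simp add: algebra_simps of_real_add of_real_diff)
  have e2: "ad * a + of_nat j - of_real (real m * l) = N + c"
    unfolding N_def c_def by (simp add: of_real_diff)
  have "ad ^ j * dfall (ad * a + of_nat j - of_real (real m * l)) (Suc n) l * a ^ j
      = ad ^ j * ((N + c) * D) * a ^ j"
    by (simp only: dfall_Suc' e1 D_def e2)
  also have "\<dots> = ad ^ j * ad * (a * D) * a ^ j + c * (ad ^ j * D * a ^ j)"
  proof -
    have cc: "ad ^ j * c = c * ad ^ j" unfolding c_def by (rule of_real_comm[symmetric])
    have "ad ^ j * ((N + c) * D) * a ^ j = ad ^ j * N * D * a ^ j + (ad ^ j * c) * D * a ^ j"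
      by (simp add: distrib_left distrib_right mult.assoc)
    also have "\<dots> = ad ^ j * ad * (a * D) * a ^ j + c * (ad ^ j * D * a ^ j)"
      unfolding cc N_def by (simp add: mult.assoc)
    finally show ?thesis .
  qed
  also have "\<dots> = T (Suc j) + c * T j"
  proof -
    have p1: "ad ^ j * ad = ad ^ Suc j" by (rule power_Suc2[symmetric])
    have p2: "a * a ^ j = a ^ Suc j" by (rule power_Suc[symmetric])
    have "ad ^ j * ad * (a * D) * a ^ j = (ad ^ j * ad) * dfall (X + 1) n l * (a * a ^ j)"
      unfolding aD by (simp only: mult.assoc)
    also have "\<dots> = T (Suc j)" unfolding p1 p2 T_def X1 N_def ..
    finally have h1: "ad ^ j * ad * (a * D) * a ^ j = T (Suc j)" .
    have h2: "ad ^ j * D * a ^ j = T j" unfolding T_def D_def X_def N_def ..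
    show ?thesis unfolding h1 h2 ..
  qed
  finally show ?thesis unfolding c_def .
qed

lemma main:
  fixes a ad :: "'a::real_algebra_1"
  assumes comm: "a * ad = ad * a + 1"
  shows "dfall (ad * a) (m + n) l =
    (\<Sum>j=0..m. of_real (S m j l) * ad ^ j
        * dfall (ad * a + of_nat j - of_real (real m * l)) n l * a ^ j)"
proof (induction m arbitrary: n)
  case 0 then show ?case by simp
next
  case (Suc m)
  define T where "T \<equiv> \<lambda>k. ad ^ k * dfall (ad * a + of_nat k - of_real (real (Suc m) * l)) n l * a ^ k"
  have "dfall (ad * a) (Suc m + n) l = dfall (ad * a) (m + Suc n) l" by simp
  also have "\<dots> = (\<Sum>j=0..m. of_real (S m j l) * (ad ^ j
        * dfall (ad * a + of_nat j - of_real (real m * l)) (Suc n) l * a ^ j))"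
    unfolding Suc.IH by (simp add: mult.assoc)
  also have "\<dots> = (\<Sum>j=0..m. of_real (S m j l) * (T (Suc j) + of_real (real j - real m * l) * T j))"
    unfolding T_def step_term[OF comm] ..
  also have "\<dots> = (\<Sum>k=0..Suc m. of_real (S (Suc m) k l) * T k)"
    by (rule S_rec_sum[symmetric])
  finally show ?case unfolding T_def by (simp add: mult.assoc)
qed

theorem theorem2p4:
  fixes a ad :: "'a::real_algebra_1" and l :: real and m n :: nat
  assumes "a * ad - ad * a = 1" and "l \<noteq> 0"
  shows "dfall (ad * a) (m + n) l =
    (\<Sum>j=0..m. of_real (dstirling m j l) * ad ^ j
        * dfall (ad * a + of_nat j - of_real (real m * l)) n l * a ^ j)"
proof -
  have comm: "a * ad = ad * a + 1" using assms(1) by (simp add: algebra_simps)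
  show ?thesis unfolding dstirling_eq by (rule main[OF comm])
qed

end
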